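(* Let $n\ge 2$ and let $r_1,\ldots,r_n>0$ be such that there exists a homothetic square packing with radii $r_1,\ldots,r_n$ and $k$ contacts. Then for every $r_{n+1}>0$ there exists a homothetic square packing with radii $r_1,\ldots,r_{n+1}$ and at least $k+2$ contacts.
   Context: Let $S=\{(x,y): -1\le x,y\le 1\}$. A homothetic square packing with radii $r_1,\ldots,r_m$ is a set $\{S_1,\ldots,S_m\}$ with $S_i=r_iS+p_i$ for some $p_i\in\mathbb{R}^2$, such that distinct squares have disjoint interiors. A contact is an unordered pair $\{i,j\}$, $i\ne j$, with $S_i\cap S_j\ne\emptyset$. *)

theory Defs
  imports "HOL-Analysis.Analysis"
begin

definition hsquare :: "real \<Rightarrow> real \<times> real \<Rightarrow> (real \<times> real) set" where
  "hsquare r p = {q. \<bar>fst q - fst p\<bar> \<le> r \<and> \<bar>snd q - snd p\<bar> \<le> r}"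

definition is_packing :: "nat \<Rightarrow> (nat \<Rightarrow> real) \<Rightarrow> (nat \<Rightarrow> real \<times> real) \<Rightarrow> bool" where
  "is_packing m r p \<longleftrightarrow>
     (\<forall>i j. i < m \<and> j < m \<and> i \<noteq> j \<longrightarrow>
        interior (hsquare (r i) (p i)) \<inter> interior (hsquare (r j) (p j)) = {})"

definition contacts :: "nat \<Rightarrow> (nat \<Rightarrow> real) \<Rightarrow> (nat \<Rightarrow> real \<times> real) \<Rightarrow> nat set set" where
  "contacts m r p = {{i, j} | i j. i < m \<and> j < m \<and> i \<noteq> j \<and>
                       hsquare (r i) (p i) \<inter> hsquare (r j) (p j) \<noteq> {}}"

end

theory Submission
  imports Defs
begin


lemma hsq_eq: "hsquare r c = {fst c - r .. fst c + r} \<times> {snd c - r .. snd c + r}"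
  by (auto simp: hsquare_def abs_le_iff)

lemma int_hsq: "interior (hsquare r c) = {fst c - r <..< fst c + r} \<times> {snd c - r <..< snd c + r}"
  by (simp add: hsq_eq interior_Times)

lemma int_disj:
  assumes "r1 > 0" "r2 > 0"
  shows "interior (hsquare r1 c1) \<inter> interior (hsquare r2 c2) = {} \<longleftrightarrow>
    (\<bar>fst c1 - fst c2\<bar> \<ge> r1 + r2 \<or> \<bar>snd c1 - snd c2\<bar> \<ge> r1 + r2)"
proof
  assume h: "interior (hsquare r1 c1) \<inter> interior (hsquare r2 c2) = {}"
  show "\<bar>fst c1 - fst c2\<bar> \<ge> r1 + r2 \<or> \<bar>snd c1 - snd c2\<bar> \<ge> r1 + r2"
  proof (rule ccontr)
    assume "\<not> ?thesis"
    hence a: "\<bar>fst c1 - fst c2\<bar> < r1 + r2" "\<bar>snd c1 - snd c2\<bar> < r1 + r2" by auto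
    define x where "x = (max (fst c1 - r1) (fst c2 - r2) + min (fst c1 + r1) (fst c2 + r2)) / 2"
    define y where "y = (max (snd c1 - r1) (snd c2 - r2) + min (snd c1 + r1) (snd c2 + r2)) / 2"
    have "(x, y) \<in> interior (hsquare r1 c1) \<inter> interior (hsquare r2 c2)"
      unfolding int_hsq using a assms by (auto simp: x_def y_def abs_less_iff max_def min_def)
    with h show False by auto
  qed
next
  assume "\<bar>fst c1 - fst c2\<bar> \<ge> r1 + r2 \<or> \<bar>snd c1 - snd c2\<bar> \<ge> r1 + r2"
  thus "interior (hsquare r1 c1) \<inter> interior (hsquare r2 c2) = {}"
    unfolding int_hsq by (auto simp: abs_le_iff)
qed

lemma touch:
  assumes "r1 \<ge> 0" "r2 \<ge> 0"
  shows "hsquare r1 c1 \<inter> hsquare r2 c2 \<noteq> {} \<longleftrightarrow>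
    (\<bar>fst c1 - fst c2\<bar> \<le> r1 + r2 \<and> \<bar>snd c1 - snd c2\<bar> \<le> r1 + r2)"
proof
  assume "hsquare r1 c1 \<inter> hsquare r2 c2 \<noteq> {}"
  then obtain z where "z \<in> hsquare r1 c1" "z \<in> hsquare r2 c2" by auto
  thus "\<bar>fst c1 - fst c2\<bar> \<le> r1 + r2 \<and> \<bar>snd c1 - snd c2\<bar> \<le> r1 + r2"
    by (auto simp: hsquare_def abs_le_iff)
next
  assume a: "\<bar>fst c1 - fst c2\<bar> \<le> r1 + r2 \<and> \<bar>snd c1 - snd c2\<bar> \<le> r1 + r2"
  define x where "x = max (fst c1 - r1) (fst c2 - r2)"
  define y where "y = max (snd c1 - r1) (snd c2 - r2)"
  have "(x, y) \<in> hsquare r1 c1 \<inter> hsquare r2 c2"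
    using a assms by (auto simp: hsquare_def x_def y_def abs_le_iff max_def)
  thus "hsquare r1 c1 \<inter> hsquare r2 c2 \<noteq> {}" by auto
qed

lemma argmax:
  fixes f :: "nat \<Rightarrow> real"
  assumes "finite S" "S \<noteq> {}"
  obtains k where "k \<in> S" "\<forall>j\<in>S. f j \<le> f k"
proof -
  have "Max (f ` S) \<in> f ` S" using assms by simp
  then obtain k where "k \<in> S" "f k = Max (f ` S)" by auto
  moreover have "\<forall>j\<in>S. f j \<le> Max (f ` S)" using assms by simp
  ultimately show ?thesis using that by auto
qed


lemma contacts_sub: "contacts m r p \<subseteq> Pow {..<m}"
  unfolding contacts_def by auto

lemma finite_contacts: "finite (contacts m r p)"
  by (rule finite_subset[OF contacts_sub]) auto

lemma add_sq:
  assumes pk: "is_packing n r p'" and pos: "\<forall>i<n. r i > 0" and rho: "\<rho> > 0"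
    and sub: "contacts n r p \<subseteq> contacts n r p'"
    and dis: "\<forall>j<n. \<bar>fst c - fst (p' j)\<bar> \<ge> \<rho> + r j \<or> \<bar>snd c - snd (p' j)\<bar> \<ge> \<rho> + r j"
    and ij: "i < n" "j < n" "i \<noteq> j"
    and ti: "\<bar>fst c - fst (p' i)\<bar> \<le> \<rho> + r i \<and> \<bar>snd c - snd (p' i)\<bar> \<le> \<rho> + r i"
    and tj: "\<bar>fst c - fst (p' j)\<bar> \<le> \<rho> + r j \<and> \<bar>snd c - snd (p' j)\<bar> \<le> \<rho> + r j"
  shows "is_packing (Suc n) (r(n:=\<rho>)) (p'(n:=c)) \<and>
     card (contacts n r p) + 2 \<le> card (contacts (Suc n) (r(n:=\<rho>)) (p'(n:=c)))"
proof
  show "is_packing (Suc n) (r(n:=\<rho>)) (p'(n:=c))"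
    unfolding is_packing_def
  proof (intro allI impI)
    fix a b assume h: "a < Suc n \<and> b < Suc n \<and> a \<noteq> b"
    show "interior (hsquare ((r(n := \<rho>)) a) ((p'(n := c)) a)) \<inter>
          interior (hsquare ((r(n := \<rho>)) b) ((p'(n := c)) b)) = {}"
    proof (cases "a = n")
      case True
      with h have "b < n" by auto
      thus ?thesis using True dis pos rho int_disj[of \<rho> "r b" c "p' b"] by auto
    next
      case False
      show ?thesis
      proof (cases "b = n")
        case True
        with h False have "a < n" by auto
        thus ?thesis using True False dis pos rho int_disj[of "r a" \<rho> "p' a" c]
          by (auto simp: abs_minus_commute)
      next
        case False2: False
        with h False have "a < n" "b < n" by auto
        thus ?thesis using False False2 pk h unfolding is_packing_def by auto
      qed
    qed
  qed
next
  let ?C = "contacts (Suc n) (r(n:=\<rho>)) (p'(n:=c))"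
  have s1: "contacts n r p' \<subseteq> ?C"
    unfolding contacts_def by force
  have ni: "{i, n} \<in> ?C"
  proof -
    have "r i > 0" using pos ij by auto
    hence "hsquare \<rho> c \<inter> hsquare (r i) (p' i) \<noteq> {}"
      using ti rho touch[of \<rho> "r i" c "p' i"] by auto
    hence "hsquare ((r(n:=\<rho>)) i) ((p'(n:=c)) i) \<inter> hsquare ((r(n:=\<rho>)) n) ((p'(n:=c)) n) \<noteq> {}"
      using ij by (auto simp: Int_commute)
    moreover have "i < Suc n" "n < Suc n" "i \<noteq> n" using ij by auto
    ultimately show ?thesis unfolding contacts_def by blast
  qed
  have nj: "{j, n} \<in> ?C"
  proof -
    have "r j > 0" using pos ij by auto
    hence "hsquare \<rho> c \<inter> hsquare (r j) (p' j) \<noteq> {}"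
      using tj rho touch[of \<rho> "r j" c "p' j"] by auto
    hence "hsquare ((r(n:=\<rho>)) j) ((p'(n:=c)) j) \<inter> hsquare ((r(n:=\<rho>)) n) ((p'(n:=c)) n) \<noteq> {}"
      using ij by (auto simp: Int_commute)
    moreover have "j < Suc n" "n < Suc n" "j \<noteq> n" using ij by auto
    ultimately show ?thesis unfolding contacts_def by blast
  qed
  have old: "contacts n r p \<subseteq> Pow {..<n}" by (rule contacts_sub)
  have "{i,n} \<notin> contacts n r p" "{j,n} \<notin> contacts n r p" using old by auto
  moreover have "{i,n} \<noteq> {j,n}" using ij by (auto simp: doubleton_eq_iff)
  ultimately have "card (contacts n r p \<union> {{i,n},{j,n}}) = card (contacts n r p) + 2"
    using finite_contacts[of n r p] by (simp add: card_insert_if)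
  moreover have "contacts n r p \<union> {{i,n},{j,n}} \<subseteq> ?C" using s1 sub ni nj by auto
  ultimately show "card (contacts n r p) + 2 \<le> card ?C"
    by (metis card_mono finite_contacts)
qed


lemma iso_case:
  assumes pk: "is_packing n r p" and pos: "\<forall>i<n. r i > 0" and rho: "\<rho> > 0"
    and n2: "n \<ge> 2" and i0: "i0 < n"
    and iso: "\<forall>j<n. j \<noteq> i0 \<longrightarrow> hsquare (r i0) (p i0) \<inter> hsquare (r j) (p j) = {}"
  shows "\<exists>q. is_packing (Suc n) (r(n:=\<rho>)) q \<and>
     card (contacts n r p) + 2 \<le> card (contacts (Suc n) (r(n:=\<rho>)) q)"
proof -
  let ?S = "{j. j < n \<and> j \<noteq> i0}"
  have "finite ?S" by auto
  moreover have "?S \<noteq> {}"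
  proof (cases "i0 = 0")
    case True thus ?thesis using n2 by (auto intro!: exI[of _ 1])
  next
    case False thus ?thesis using i0 by (auto intro!: exI[of _ 0])
  qed
  ultimately obtain m where m: "m \<in> ?S" and mx: "\<forall>j\<in>?S. snd (p j) + r j \<le> snd (p m) + r m"
    using argmax[of ?S "\<lambda>j. snd (p j) + r j"] by blast
  define T where "T = snd (p m) + r m"
  define new0 where "new0 = (fst (p m) - r m + r i0, T + r i0)"
  define p' where "p' = p(i0 := new0)"
  define c where "c = (fst (p m) - r m - \<rho>, T + \<rho>)"
  have ri0: "r i0 > 0" using pos i0 by auto
  have rm: "r m > 0" using pos m by auto
  have pk': "is_packing n r p'"
    unfolding is_packing_def
  proof (intro allI impI)
    fix a b assume h: "a < n \<and> b < n \<and> a \<noteq> b"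
    have ra: "r a > 0" "r b > 0" using h pos by auto
    show "interior (hsquare (r a) (p' a)) \<inter> interior (hsquare (r b) (p' b)) = {}"
    proof (cases "a = i0")
      case True
      hence "snd (p b) + r b \<le> T" using mx h T_def by auto
      hence "\<bar>snd (p' a) - snd (p' b)\<bar> \<ge> r a + r b"
        using True h ra by (auto simp: p'_def new0_def)
      thus ?thesis using int_disj[OF ra] by blast
    next
      case False
      show ?thesis
      proof (cases "b = i0")
        case True
        hence "snd (p a) + r a \<le> T" using mx h T_def by auto
        hence "\<bar>snd (p' a) - snd (p' b)\<bar> \<ge> r a + r b"
          using True h ra by (auto simp: p'_def new0_def)
        thus ?thesis using int_disj[OF ra] by blast
      next
        case False2: False
        thus ?thesis using False h pk unfolding is_packing_def p'_def by auto
      qed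
    qed
  qed
  have sub: "contacts n r p \<subseteq> contacts n r p'"
  proof
    fix e assume "e \<in> contacts n r p"
    then obtain a b where e: "e = {a,b}" "a < n" "b < n" "a \<noteq> b"
      and t: "hsquare (r a) (p a) \<inter> hsquare (r b) (p b) \<noteq> {}"
      unfolding contacts_def by blast
    have "a \<noteq> i0" using iso t e by auto
    moreover have "b \<noteq> i0" using iso t e by (auto simp: Int_commute)
    ultimately have "hsquare (r a) (p' a) \<inter> hsquare (r b) (p' b) \<noteq> {}"
      using t by (simp add: p'_def)
    thus "e \<in> contacts n r p'" unfolding contacts_def using e by blast
  qed
  have dis: "\<forall>j<n. \<bar>fst c - fst (p' j)\<bar> \<ge> \<rho> + r j \<or> \<bar>snd c - snd (p' j)\<bar> \<ge> \<rho> + r j"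
  proof (intro allI impI)
    fix j assume j: "j < n"
    show "\<bar>fst c - fst (p' j)\<bar> \<ge> \<rho> + r j \<or> \<bar>snd c - snd (p' j)\<bar> \<ge> \<rho> + r j"
    proof (cases "j = i0")
      case True thus ?thesis using ri0 rho by (auto simp: p'_def new0_def c_def)
    next
      case False
      hence "snd (p j) + r j \<le> T" using mx j T_def by auto
      thus ?thesis using False rho pos j by (auto simp: p'_def c_def)
    qed
  qed
  have ti: "\<bar>fst c - fst (p' m)\<bar> \<le> \<rho> + r m \<and> \<bar>snd c - snd (p' m)\<bar> \<le> \<rho> + r m"
    using m rm rho by (auto simp: p'_def c_def T_def)
  have tj: "\<bar>fst c - fst (p' i0)\<bar> \<le> \<rho> + r i0 \<and> \<bar>snd c - snd (p' i0)\<bar> \<le> \<rho> + r i0"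
    using ri0 rho by (auto simp: p'_def c_def new0_def)
  have "m < n" "m \<noteq> i0" using m by auto
  from add_sq[OF pk' pos rho sub dis this(1) i0 this(2) ti tj] show ?thesis by blast
qed


lemma geabs: "(a::real) \<le> b \<Longrightarrow> a \<le> \<bar>b\<bar>"
  by simp

theorem lemma20:
  fixes n k :: nat and r :: "nat \<Rightarrow> real" and p :: "nat \<Rightarrow> real \<times> real"
  assumes "n \<ge> 2"
    and "\<forall>i < n. r i > 0"
    and "is_packing n r p"
    and "card (contacts n r p) = k"
  shows "\<forall>\<rho> > 0. \<exists>q :: nat \<Rightarrow> real \<times> real.
           is_packing (Suc n) (r(n := \<rho>)) q \<and> card (contacts (Suc n) (r(n := \<rho>)) q) \<ge> k + 2"
proof (intro allI impI)
  fix \<rho> :: real assume rho: "\<rho> > 0"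
  note n2 = assms(1) and pos = assms(2) and pk = assms(3)
  define x where "x j = fst (p j)" for j
  define y where "y j = snd (p j)" for j
  have "0 \<in> {..<n}" using n2 by simp
  hence ne: "{..<n} \<noteq> {}" by blast
  obtain i0 where "i0 \<in> {..<n}" and top0: "\<forall>j\<in>{..<n}. y j + r j \<le> y i0 + r i0"
    using argmax[OF finite_lessThan ne, of "\<lambda>j. y j + r j"] by blast
  hence i0: "i0 < n" and top: "\<forall>j<n. y j + r j \<le> y i0 + r i0" by auto
  have r0: "r i0 > 0" using pos i0 by auto
  have posn: "\<And>j. j < n \<Longrightarrow> r j > 0" using pos by auto
  define CR where "CR = {k. k < n \<and> x k - r k < x i0 + r i0 + 2*\<rho> \<and> x k + r k > x i0 + r i0}"
  define CL where "CL = {k. k < n \<and> x k - r k < x i0 - r i0 \<and> x k + r k > x i0 - r i0 - 2*\<rho>}"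
  define K where "K = {k. k < n \<and> y k - r k < y i0 - r i0 \<and> y k + r k > y i0 - r i0 - 2*\<rho>
     \<and> x k - r k < x i0 + r i0 + 2*\<rho> \<and> x k + r k > x i0 - r i0 - 2*\<rho>}"
  have fin: "finite CR" "finite CL" "finite K" unfolding CR_def CL_def K_def by auto
  have goal: "\<exists>q. is_packing (Suc n) (r(n:=\<rho>)) q \<and>
     card (contacts n r p) + 2 \<le> card (contacts (Suc n) (r(n:=\<rho>)) q)"
  proof (cases "\<exists>k\<in>CR. y k + r k \<ge> y i0 - r i0 - 2*\<rho>")
    case True
    hence "CR \<noteq> {}" by auto
    then obtain km where km: "km \<in> CR" and mx: "\<forall>j\<in>CR. y j + r j \<le> y km + r km"
      using argmax[of CR "\<lambda>j. y j + r j"] fin by blast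
    define h where "h = y km + r km"
    define c where "c = (x i0 + r i0 + \<rho>, h + \<rho>)"
    have hge: "h \<ge> y i0 - r i0 - 2*\<rho>" using True mx h_def by force
    have kmn: "km < n" "km \<noteq> i0" using km by (auto simp: CR_def)
    have hle: "h \<le> y i0 + r i0" using top kmn h_def by auto
    have dis: "\<forall>j<n. \<bar>fst c - fst (p j)\<bar> \<ge> \<rho> + r j \<or> \<bar>snd c - snd (p j)\<bar> \<ge> \<rho> + r j"
    proof (intro allI impI)
      fix j assume j: "j < n"
      show "\<bar>fst c - fst (p j)\<bar> \<ge> \<rho> + r j \<or> \<bar>snd c - snd (p j)\<bar> \<ge> \<rho> + r j"
      proof (cases "j \<in> CR")
        case True
        hence "y j + r j \<le> h" using mx h_def by blast
        hence "snd c - snd (p j) \<ge> \<rho> + r j" by (simp add: c_def y_def)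
        thus ?thesis by (simp add: geabs)
      next
        case False
        hence "x j - r j \<ge> x i0 + r i0 + 2*\<rho> \<or> x j + r j \<le> x i0 + r i0" using j unfolding CR_def by auto
        hence "fst (p j) - fst c \<ge> \<rho> + r j \<or> fst c - fst (p j) \<ge> \<rho> + r j"
          unfolding c_def x_def by auto
        thus ?thesis using geabs by (metis abs_minus_commute)
      qed
    qed
    have ti: "\<bar>fst c - fst (p km)\<bar> \<le> \<rho> + r km \<and> \<bar>snd c - snd (p km)\<bar> \<le> \<rho> + r km"
      using km posn[OF kmn(1)] rho by (auto simp: c_def h_def x_def y_def CR_def)
    have tj: "\<bar>fst c - fst (p i0)\<bar> \<le> \<rho> + r i0 \<and> \<bar>snd c - snd (p i0)\<bar> \<le> \<rho> + r i0"
      using hge hle r0 rho by (auto simp: c_def x_def y_def)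
    from add_sq[OF pk pos rho subset_refl dis kmn(1) i0 kmn(2) ti tj] show ?thesis by blast
  next
    case notR: False
    show ?thesis
    proof (cases "K = {}")
      case False
      then obtain km where km: "km \<in> K" and mx: "\<forall>j\<in>K. x j + r j \<le> x km + r km"
        using argmax[of K "\<lambda>j. x j + r j"] fin by blast
      define u where "u = x km + r km"
      define c where "c = (u + \<rho>, y i0 - r i0 - \<rho>)"
      have kmn: "km < n" "km \<noteq> i0" using km by (auto simp: K_def)
      have Kb: "\<forall>j\<in>K. x j + r j \<le> x i0 + r i0"
      proof
        fix j assume j: "j \<in> K"
        show "x j + r j \<le> x i0 + r i0"
        proof (rule ccontr)
          assume "\<not> ?thesis"
          hence "j \<in> CR" using j by (auto simp: K_def CR_def)
          thus False using notR j by (auto simp: K_def)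
        qed
      qed
      have ule: "u \<le> x i0 + r i0" using Kb km u_def by auto
      have ugt: "u > x i0 - r i0 - 2*\<rho>" using km u_def by (auto simp: K_def)
      have dis: "\<forall>j<n. \<bar>fst c - fst (p j)\<bar> \<ge> \<rho> + r j \<or> \<bar>snd c - snd (p j)\<bar> \<ge> \<rho> + r j"
      proof (intro allI impI)
        fix j assume j: "j < n"
        show "\<bar>fst c - fst (p j)\<bar> \<ge> \<rho> + r j \<or> \<bar>snd c - snd (p j)\<bar> \<ge> \<rho> + r j"
        proof (cases "j \<in> K")
          case True
          hence "x j + r j \<le> u" using mx u_def by blast
          hence "fst c - fst (p j) \<ge> \<rho> + r j" by (simp add: c_def x_def)
          thus ?thesis by (simp add: geabs)
        next
          case False
          hence "y j - r j \<ge> y i0 - r i0 \<or> y j + r j \<le> y i0 - r i0 - 2*\<rho> \<or>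
            x j - r j \<ge> x i0 + r i0 + 2*\<rho> \<or> x j + r j \<le> x i0 - r i0 - 2*\<rho>"
            using j unfolding K_def by auto
          hence "fst (p j) - fst c \<ge> \<rho> + r j \<or> fst c - fst (p j) \<ge> \<rho> + r j \<or>
                 snd (p j) - snd c \<ge> \<rho> + r j \<or> snd c - snd (p j) \<ge> \<rho> + r j"
            using ule ugt unfolding c_def x_def y_def by auto
          thus ?thesis using geabs by (metis abs_minus_commute)
        qed
      qed
      have ti: "\<bar>fst c - fst (p km)\<bar> \<le> \<rho> + r km \<and> \<bar>snd c - snd (p km)\<bar> \<le> \<rho> + r km"
        using km posn[OF kmn(1)] rho by (auto simp: c_def u_def x_def y_def K_def)
      have tj: "\<bar>fst c - fst (p i0)\<bar> \<le> \<rho> + r i0 \<and> \<bar>snd c - snd (p i0)\<bar> \<le> \<rho> + r i0"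
        using ule ugt r0 rho by (auto simp: c_def x_def y_def)
      from add_sq[OF pk pos rho subset_refl dis kmn(1) i0 kmn(2) ti tj] show ?thesis by blast
    next
      case Kempty: True
      show ?thesis
      proof (cases "\<exists>k\<in>CL. y k + r k \<ge> y i0 - r i0 - 2*\<rho>")
        case True
        hence "CL \<noteq> {}" by auto
        then obtain km where km: "km \<in> CL" and mx: "\<forall>j\<in>CL. y j + r j \<le> y km + r km"
          using argmax[of CL "\<lambda>j. y j + r j"] fin by blast
        define h where "h = y km + r km"
        define c where "c = (x i0 - r i0 - \<rho>, h + \<rho>)"
        have hge: "h \<ge> y i0 - r i0 - 2*\<rho>" using True mx h_def by force
        have kmn: "km < n" "km \<noteq> i0" using km by (auto simp: CL_def)
        have hle: "h \<le> y i0 + r i0" using top kmn h_def by auto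
        have dis: "\<forall>j<n. \<bar>fst c - fst (p j)\<bar> \<ge> \<rho> + r j \<or> \<bar>snd c - snd (p j)\<bar> \<ge> \<rho> + r j"
        proof (intro allI impI)
          fix j assume j: "j < n"
          show "\<bar>fst c - fst (p j)\<bar> \<ge> \<rho> + r j \<or> \<bar>snd c - snd (p j)\<bar> \<ge> \<rho> + r j"
          proof (cases "j \<in> CL")
            case True
            hence "y j + r j \<le> h" using mx h_def by blast
            hence "snd c - snd (p j) \<ge> \<rho> + r j" by (simp add: c_def y_def)
            thus ?thesis by (simp add: geabs)
          next
            case False
            hence "x j - r j \<ge> x i0 - r i0 \<or> x j + r j \<le> x i0 - r i0 - 2*\<rho>" using j unfolding CL_def by auto
            hence "fst (p j) - fst c \<ge> \<rho> + r j \<or> fst c - fst (p j) \<ge> \<rho> + r j"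
              unfolding c_def x_def by auto
            thus ?thesis using geabs by (metis abs_minus_commute)
          qed
        qed
        have ti: "\<bar>fst c - fst (p km)\<bar> \<le> \<rho> + r km \<and> \<bar>snd c - snd (p km)\<bar> \<le> \<rho> + r km"
          using km posn[OF kmn(1)] rho by (auto simp: c_def h_def x_def y_def CL_def)
        have tj: "\<bar>fst c - fst (p i0)\<bar> \<le> \<rho> + r i0 \<and> \<bar>snd c - snd (p i0)\<bar> \<le> \<rho> + r i0"
          using hge hle r0 rho by (auto simp: c_def x_def y_def)
        from add_sq[OF pk pos rho subset_refl dis kmn(1) i0 kmn(2) ti tj] show ?thesis by blast
      next
        case notL: False
        have iso: "\<forall>j<n. j \<noteq> i0 \<longrightarrow> hsquare (r i0) (p i0) \<inter> hsquare (r j) (p j) = {}"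
        proof (intro allI impI)
          fix j assume j: "j < n" "j \<noteq> i0"
          show "hsquare (r i0) (p i0) \<inter> hsquare (r j) (p j) = {}"
          proof (rule ccontr)
            assume "hsquare (r i0) (p i0) \<inter> hsquare (r j) (p j) \<noteq> {}"
            hence t: "\<bar>x i0 - x j\<bar> \<le> r i0 + r j \<and> \<bar>y i0 - y j\<bar> \<le> r i0 + r j"
              using touch[of "r i0" "r j"] r0 posn[OF j(1)] by (auto simp: x_def y_def)
            have d: "\<bar>x i0 - x j\<bar> \<ge> r i0 + r j \<or> \<bar>y i0 - y j\<bar> \<ge> r i0 + r j"
              using pk j i0 int_disj[OF r0 posn[OF j(1)]] unfolding is_packing_def x_def y_def by metis
            have tx: "x i0 - x j \<le> r i0 + r j" "x j - x i0 \<le> r i0 + r j"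
              and ty: "y i0 - y j \<le> r i0 + r j" "y j - y i0 \<le> r i0 + r j"
              using t by (auto simp: abs_le_iff)
            have tp: "y j + r j \<le> y i0 + r i0" using top j by auto
            have rj: "r j > 0" using posn[OF j(1)] .
            have "x i0 - x j \<ge> r i0 + r j \<or> x j - x i0 \<ge> r i0 + r j \<or>
                  y i0 - y j \<ge> r i0 + r j \<or> y j - y i0 \<ge> r i0 + r j"
              using d by linarith
            thus False
            proof (elim disjE)
              assume a: "x i0 - x j \<ge> r i0 + r j"
              have "j \<in> CL" unfolding CL_def using j a tx rj rho by simp
              moreover have "y j + r j \<ge> y i0 - r i0 - 2*\<rho>" using ty rho by linarith
              ultimately show False using notL by blast
            next
              assume a: "x j - x i0 \<ge> r i0 + r j"
              have "j \<in> CR" unfolding CR_def using j a tx rj rho by simp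
              moreover have "y j + r j \<ge> y i0 - r i0 - 2*\<rho>" using ty rho by linarith
              ultimately show False using notR by blast
            next
              assume a: "y i0 - y j \<ge> r i0 + r j"
              have "j \<in> K" unfolding K_def using j a tx ty rj r0 rho by simp
              thus False using Kempty by blast
            next
              assume a: "y j - y i0 \<ge> r i0 + r j"
              show False using a tp rj r0 by linarith
            qed
          qed
        qed
        show ?thesis using iso_case[OF pk pos rho n2 i0 iso] .
      qed
    qed
  qed
  thus "\<exists>q. is_packing (Suc n) (r(n := \<rho>)) q \<and> card (contacts (Suc n) (r(n := \<rho>)) q) \<ge> k + 2"
    using assms(4) by simp
qed

end
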